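(* Let $\lambda$ be a regular uncountable cardinal and $\mathcal{C}=\langle\mathcal{C}_\alpha\mid\alpha<\lambda\rangle$ a coherent sequence of length $\lambda$ (of arbitrary width). Suppose $T_0,T_1\subseteq\lambda$ are unbounded and for every $\alpha\in T_1$ there is $C\in\mathcal{C}_\alpha$ with $T_0\cap\alpha\subseteq C$. Then $\mathcal{C}$ has a weak thread.
   Context: For a set of ordinals $A$, $\mathrm{acc}(A)$ is the set of $\beta<\sup\{\alpha+1\mid\alpha\in A\}$ with $\beta=\sup(A\cap\beta)$. A coherent sequence of length $\lambda$ (of arbitrary width) is $\mathcal{C}=\langle\mathcal{C}_\alpha\mid\alpha<\lambda\rangle$ where each $\mathcal{C}_\alpha$ is a nonempty set of closed unbounded subsets of $\alpha$ (for successor $\alpha=\beta+1$, $\mathcal{C}_\alpha=\{\{\beta\}\}$), such that for all $\beta<\lambda$, $C\in\mathcal{C}_\beta$ and $\alpha\in\mathrm{acc}(C)$, $C\cap\alpha\in\mathcal{C}_\alpha$. A weak thread through $\mathcal{C}$ is a club $E\subseteq\lambda$ such that for every $\alpha\in\mathrm{acc}(E)$ there is $C\in\mathcal{C}_\alpha$ with $E\cap\alpha\subseteq C$. *)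

theory Defs
  imports Main "HOL-Library.Equipollence" "HOL-Library.Countable_Set"
begin

text \<open>Ordinals below lambda are modelled as the elements of a well-ordered type 'a;
  lambda is the order type of 'a.\<close>

definition regular_uncountable_cardinal_type :: "'a::wellorder itself \<Rightarrow> bool" where
  "regular_uncountable_cardinal_type _ \<longleftrightarrow>
     (\<forall>a::'a. {..<a} \<prec> (UNIV::'a set)) \<and>
     (\<forall>A::'a set. A \<prec> (UNIV::'a set) \<longrightarrow> (\<exists>b. \<forall>a\<in>A. a < b)) \<and>
     \<not> countable (UNIV::'a set)"

definition acc :: "'a::wellorder set \<Rightarrow> 'a set" where
  "acc A = {\<beta>. (\<exists>a\<in>A. \<beta> \<le> a) \<and> (\<forall>\<gamma><\<beta>. \<exists>a\<in>A. \<gamma> < a \<and> a < \<beta>)}"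

definition club_below :: "'a::wellorder \<Rightarrow> 'a set \<Rightarrow> bool" where
  "club_below \<alpha> C \<longleftrightarrow> C \<subseteq> {..<\<alpha>} \<and>
     (\<forall>\<gamma><\<alpha>. \<exists>c\<in>C. \<gamma> \<le> c) \<and>
     (\<forall>\<beta><\<alpha>. (\<exists>\<gamma>. \<gamma> < \<beta>) \<and> (\<forall>\<gamma><\<beta>. \<exists>c\<in>C. \<gamma> < c \<and> c < \<beta>) \<longrightarrow> \<beta> \<in> C)"

definition club :: "'a::wellorder set \<Rightarrow> bool" where
  "club C \<longleftrightarrow> (\<forall>\<gamma>. \<exists>c\<in>C. \<gamma> \<le> c) \<and>
     (\<forall>\<beta>. (\<exists>\<gamma>. \<gamma> < \<beta>) \<and> (\<forall>\<gamma><\<beta>. \<exists>c\<in>C. \<gamma> < c \<and> c < \<beta>) \<longrightarrow> \<beta> \<in> C)"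

definition unbounded :: "'a::wellorder set \<Rightarrow> bool" where
  "unbounded T \<longleftrightarrow> (\<forall>\<gamma>. \<exists>t\<in>T. \<gamma> \<le> t)"

definition coherent_seq :: "('a::wellorder \<Rightarrow> 'a set set) \<Rightarrow> bool" where
  "coherent_seq \<C> \<longleftrightarrow>
     (\<forall>\<alpha>. \<C> \<alpha> \<noteq> {} \<and> (\<forall>C\<in>\<C> \<alpha>. club_below \<alpha> C)) \<and>
     (\<forall>\<alpha> \<beta>. \<beta> < \<alpha> \<and> \<not> (\<exists>\<gamma>. \<beta> < \<gamma> \<and> \<gamma> < \<alpha>) \<longrightarrow> \<C> \<alpha> = {{\<beta>}}) \<and>
     (\<forall>\<beta>. \<forall>C\<in>\<C> \<beta>. \<forall>\<alpha>\<in>acc C. C \<inter> {..<\<alpha>} \<in> \<C> \<alpha>)"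

definition weak_thread :: "('a::wellorder \<Rightarrow> 'a set set) \<Rightarrow> 'a set \<Rightarrow> bool" where
  "weak_thread \<C> E \<longleftrightarrow> club E \<and>
     (\<forall>\<alpha>\<in>acc E. \<exists>C\<in>\<C> \<alpha>. E \<inter> {..<\<alpha>} \<subseteq> C)"

end

theory Submission
  imports Defs
begin

theorem lemma2p4:
  fixes \<C> :: "'a::wellorder \<Rightarrow> 'a set set" and T0 T1 :: "'a set"
  assumes "regular_uncountable_cardinal_type TYPE('a)"
    and "coherent_seq \<C>"
    and "unbounded T0" and "unbounded T1"
    and "\<forall>\<alpha>\<in>T1. \<exists>C\<in>\<C> \<alpha>. T0 \<inter> {..<\<alpha>} \<subseteq> C"
  shows "\<exists>E. weak_thread \<C> E"
proof -
  define E where "E = T0 \<union> {\<beta>. (\<exists>\<gamma>. \<gamma> < \<beta>) \<and> (\<forall>\<gamma><\<beta>. \<exists>a\<in>T0. \<gamma> < a \<and> a < \<beta>)}"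
  have coh: "\<forall>\<alpha>. \<forall>C\<in>\<C> \<alpha>. club_below \<alpha> C" "\<forall>\<beta>. \<forall>C\<in>\<C> \<beta>. \<forall>\<alpha>\<in>acc C. C \<inter> {..<\<alpha>} \<in> \<C> \<alpha>"
    using assms(2) unfolding coherent_seq_def by auto
  have clubE: "club E"
    unfolding club_def
  proof (intro conjI allI impI)
    fix \<gamma> show "\<exists>c\<in>E. \<gamma> \<le> c" using assms(3) unfolding unbounded_def E_def by blast
  next
    fix \<beta> :: 'a assume h: "(\<exists>\<gamma>. \<gamma> < \<beta>) \<and> (\<forall>\<gamma><\<beta>. \<exists>c\<in>E. \<gamma> < c \<and> c < \<beta>)"
    have "\<forall>\<gamma><\<beta>. \<exists>a\<in>T0. \<gamma> < a \<and> a < \<beta>"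
    proof (intro allI impI)
      fix \<gamma> assume "\<gamma> < \<beta>"
      then obtain e where e: "e \<in> E" "\<gamma> < e" "e < \<beta>" using h by blast
      show "\<exists>a\<in>T0. \<gamma> < a \<and> a < \<beta>"
      proof (cases "e \<in> T0")
        case True then show ?thesis using e by blast
      next
        case False
        then have "\<forall>\<gamma><e. \<exists>a\<in>T0. \<gamma> < a \<and> a < e" using e(1) unfolding E_def by blast
        then obtain a where "a \<in> T0" "\<gamma> < a" "a < e" using e(2) by blast
        then show ?thesis using e(3) by (meson less_trans)
      qed
    qed
    then show "\<beta> \<in> E" using h unfolding E_def by blast
  qed
  have key: "E \<inter> {..<t} \<subseteq> C" if cb: "club_below t C" and sub: "T0 \<inter> {..<t} \<subseteq> C" for t C
  proof
    fix \<beta> assume b: "\<beta> \<in> E \<inter> {..<t}"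
    show "\<beta> \<in> C"
    proof (cases "\<beta> \<in> T0")
      case True then show ?thesis using b sub by blast
    next
      case False
      then have L: "(\<exists>\<gamma>. \<gamma> < \<beta>) \<and> (\<forall>\<gamma><\<beta>. \<exists>a\<in>T0. \<gamma> < a \<and> a < \<beta>)" using b unfolding E_def by blast
      have "\<forall>\<gamma><\<beta>. \<exists>c\<in>C. \<gamma> < c \<and> c < \<beta>"
      proof (intro allI impI)
        fix \<gamma> assume "\<gamma> < \<beta>"
        then obtain a where a: "a \<in> T0" "\<gamma> < a" "a < \<beta>" using L by blast
        then have "a < t" using b by (meson lessThan_iff IntD2 less_trans)
        then show "\<exists>c\<in>C. \<gamma> < c \<and> c < \<beta>" using a sub by blast
      qed
      moreover have "\<beta> < t" using b by simp
      ultimately show ?thesis using cb L unfolding club_below_def by blast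
    qed
  qed
  have "\<forall>\<alpha>\<in>acc E. \<exists>C\<in>\<C> \<alpha>. E \<inter> {..<\<alpha>} \<subseteq> C"
  proof
    fix \<alpha> assume aE: "\<alpha> \<in> acc E"
    obtain t where t: "t \<in> T1" "\<alpha> \<le> t" using assms(4) unfolding unbounded_def by blast
    obtain C where C: "C \<in> \<C> t" "T0 \<inter> {..<t} \<subseteq> C" using assms(5) t(1) by blast
    have cb: "club_below t C" using coh(1) C(1) by blast
    have EC: "E \<inter> {..<t} \<subseteq> C" using key[OF cb C(2)] .
    show "\<exists>C\<in>\<C> \<alpha>. E \<inter> {..<\<alpha>} \<subseteq> C"
    proof (cases "\<alpha> = t")
      case True then show ?thesis using C(1) EC by blast
    next
      case False
      then have at: "\<alpha> < t" using t(2) by simp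
      have "\<alpha> \<in> acc C"
        unfolding acc_def
      proof (intro CollectI conjI allI impI)
        show "\<exists>a\<in>C. \<alpha> \<le> a" using cb at unfolding club_below_def by blast
      next
        fix \<gamma> assume "\<gamma> < \<alpha>"
        then obtain e where e: "e \<in> E" "\<gamma> < e" "e < \<alpha>" using aE unfolding acc_def by blast
        then have "e \<in> C" using EC at by (meson IntI lessThan_iff less_trans subsetD)
        then show "\<exists>a\<in>C. \<gamma> < a \<and> a < \<alpha>" using e by blast
      qed
      then have "C \<inter> {..<\<alpha>} \<in> \<C> \<alpha>" using coh(2) C(1) by blast
      moreover have "E \<inter> {..<\<alpha>} \<subseteq> C \<inter> {..<\<alpha>}" using EC at by auto
      ultimately show ?thesis by blast
    qed
  qed
  then show ?thesis using clubE unfolding weak_thread_def by blast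
qed

end
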